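(* Let $\Gamma\subseteq A$ be $\Bbbk$-algebras, $\sim$ an equivalence relation on $\mathrm{cfs}(\Gamma)$, and suppose $\Gamma$ is a strong Harish-Chandra block subalgebra of $A$ with respect to $\sim$. Let $B,C,D\in\mathrm{cfs}(\Gamma)/{\sim}$, $\mathfrak m\in\mathcal W(B)$ and $\mathfrak l\in\mathcal W(D)$. Then there is $\mathfrak n\in\mathcal W(C)$ such that $$A/(\mathfrak lA+A\mathfrak n)\cong(A/\mathfrak lA)(C)\quad\text{and}\quad A/(\mathfrak nA+A\mathfrak m)\cong(A/A\mathfrak m)(C)$$ as $(\Gamma,\Gamma)$-bimodules.
   Context: $\mathrm{cfs}(\Gamma)$: maximal two-sided ideals $\mathfrak m$ with $\dim\Gamma/\mathfrak m<\infty$. For a class $B$, $\mathcal W(B)=\{\mathfrak m_1\cdots\mathfrak m_k:k\ge0,\mathfrak m_i\in B\}$. For a left $\Gamma$-module $V$, $V(B)=\{v:\mathfrak mv=0$ for some $\mathfrak m\in\mathcal W(B)\}$; for a right $\Gamma$-module (such as $A/\mathfrak lA$), $V(B)=\{v:v\mathfrak m=0$ for some $\mathfrak m\in\mathcal W(B)\}$. A strong block module is one with $V=\bigoplus_BV(B)$ and each $V(B)$ killed by some element of $\mathcal W(B)$. $\Gamma$ is a strong Harish-Chandra block subalgebra of $A$ if for all $B$ and $\mathfrak m\in\mathcal W(B)$, the left module $A/A\mathfrak m$ and the right module $A/\mathfrak mA$ are strong block modules. *)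

theory Defs
  imports Complex_Main
begin

text \<open>The ambient k-algebra A is the whole type 'a (a unital ring), with scalar
multiplication by the field 'k given by scale. Gamma is a subset G of 'a.\<close>

definition k_algebra :: "('k::field \<Rightarrow> 'a::ring_1 \<Rightarrow> 'a) \<Rightarrow> bool" where
  "k_algebra scale \<longleftrightarrow> vector_space scale \<and>
     (\<forall>c x y. scale c (x * y) = scale c x * y \<and> scale c (x * y) = x * scale c y)"

definition subalgebra :: "('k::field \<Rightarrow> 'a::ring_1 \<Rightarrow> 'a) \<Rightarrow> 'a set \<Rightarrow> bool" where
  "subalgebra scale G \<longleftrightarrow> 1 \<in> G \<and> 0 \<in> G \<and>
     (\<forall>x\<in>G. \<forall>y\<in>G. x + y \<in> G \<and> x * y \<in> G) \<and> (\<forall>c. \<forall>x\<in>G. scale c x \<in> G)"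

definition two_sided_ideal :: "'a::ring_1 set \<Rightarrow> 'a set \<Rightarrow> bool" where
  "two_sided_ideal G I \<longleftrightarrow> I \<subseteq> G \<and> 0 \<in> I \<and> (\<forall>x\<in>I. \<forall>y\<in>I. x + y \<in> I) \<and>
     (\<forall>x\<in>I. - x \<in> I) \<and> (\<forall>g\<in>G. \<forall>x\<in>I. g * x \<in> I \<and> x * g \<in> I)"

definition maximal_ideal :: "'a::ring_1 set \<Rightarrow> 'a set \<Rightarrow> bool" where
  "maximal_ideal G I \<longleftrightarrow> two_sided_ideal G I \<and> I \<noteq> G \<and>
     (\<forall>J. two_sided_ideal G J \<and> I \<subseteq> J \<longrightarrow> J = I \<or> J = G)"

definition fin_codim :: "('k::field \<Rightarrow> 'a::ring_1 \<Rightarrow> 'a) \<Rightarrow> 'a set \<Rightarrow> 'a set \<Rightarrow> bool" where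
  "fin_codim scale G I \<longleftrightarrow>
     (\<exists>S. finite S \<and> S \<subseteq> G \<and> (\<forall>g\<in>G. \<exists>s\<in>module.span scale S. g - s \<in> I))"

definition cfs :: "('k::field \<Rightarrow> 'a::ring_1 \<Rightarrow> 'a) \<Rightarrow> 'a set \<Rightarrow> 'a set set" where
  "cfs scale G = {m. maximal_ideal G m \<and> fin_codim scale G m}"

definition sprod :: "'a::ring_1 set \<Rightarrow> 'a set \<Rightarrow> 'a set" where
  "sprod I J = {(\<Sum>i<n. x i * y i) | (n::nat) x y. \<forall>i<n. x i \<in> I \<and> y i \<in> J}"

definition ssum :: "'a::ring_1 set \<Rightarrow> 'a set \<Rightarrow> 'a set" where
  "ssum I J = {x + y | x y. x \<in> I \<and> y \<in> J}"

fun ideal_prod :: "'a::ring_1 set \<Rightarrow> 'a set list \<Rightarrow> 'a set" where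
  "ideal_prod G [] = G"
| "ideal_prod G (m # ms) = sprod m (ideal_prod G ms)"

definition Wd :: "'a::ring_1 set \<Rightarrow> 'a set set \<Rightarrow> 'a set set" where
  "Wd G B = {ideal_prod G ms | ms. set ms \<subseteq> B}"

definition coset :: "'a::ring_1 set \<Rightarrow> 'a \<Rightarrow> 'a set" where
  "coset N a = {a + x | x. x \<in> N}"

definition quot :: "'a::ring_1 set \<Rightarrow> 'a set set" where
  "quot N = range (coset N)"

definition cadd :: "'a::ring_1 set \<Rightarrow> 'a set \<Rightarrow> 'a set" where
  "cadd X Y = {x + y | x y. x \<in> X \<and> y \<in> Y}"

definition lact :: "'a::ring_1 set \<Rightarrow> 'a \<Rightarrow> 'a set \<Rightarrow> 'a set" where
  "lact N g X = {g * x + n | x n. x \<in> X \<and> n \<in> N}"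

definition ract :: "'a::ring_1 set \<Rightarrow> 'a set \<Rightarrow> 'a \<Rightarrow> 'a set" where
  "ract N X g = {x * g + n | x n. x \<in> X \<and> n \<in> N}"

text \<open>V(B) for the left module V = A/N and for the right module V = A/N.\<close>
definition lblock :: "'a::ring_1 set \<Rightarrow> 'a set \<Rightarrow> 'a set set \<Rightarrow> 'a set set" where
  "lblock G N B = {X \<in> quot N. \<exists>m\<in>Wd G B. \<forall>g\<in>m. lact N g X = N}"

definition rblock :: "'a::ring_1 set \<Rightarrow> 'a set \<Rightarrow> 'a set set \<Rightarrow> 'a set set" where
  "rblock G N B = {X \<in> quot N. \<exists>m\<in>Wd G B. \<forall>g\<in>m. ract N X g = N}"

text \<open>V is the internal direct sum
  of the V(B), B ranging over the classes cls, and each V(B) is killed by some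
  element of W(B).\<close>
definition strong_block_left :: "'a::ring_1 set \<Rightarrow> 'a set set set \<Rightarrow> 'a set \<Rightarrow> bool" where
  "strong_block_left G cls N \<longleftrightarrow>
     (\<forall>a. \<exists>F f. finite F \<and> F \<subseteq> cls \<and> (\<forall>B\<in>F. coset N (f B) \<in> lblock G N B) \<and>
              coset N a = coset N (\<Sum>B\<in>F. f B)) \<and>
     (\<forall>F f. finite F \<and> F \<subseteq> cls \<and> (\<forall>B\<in>F. coset N (f B) \<in> lblock G N B) \<and>
              coset N (\<Sum>B\<in>F. f B) = N \<longrightarrow> (\<forall>B\<in>F. coset N (f B) = N)) \<and>
     (\<forall>B\<in>cls. \<exists>m\<in>Wd G B. \<forall>X\<in>lblock G N B. \<forall>g\<in>m. lact N g X = N)"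

definition strong_block_right :: "'a::ring_1 set \<Rightarrow> 'a set set set \<Rightarrow> 'a set \<Rightarrow> bool" where
  "strong_block_right G cls N \<longleftrightarrow>
     (\<forall>a. \<exists>F f. finite F \<and> F \<subseteq> cls \<and> (\<forall>B\<in>F. coset N (f B) \<in> rblock G N B) \<and>
              coset N a = coset N (\<Sum>B\<in>F. f B)) \<and>
     (\<forall>F f. finite F \<and> F \<subseteq> cls \<and> (\<forall>B\<in>F. coset N (f B) \<in> rblock G N B) \<and>
              coset N (\<Sum>B\<in>F. f B) = N \<longrightarrow> (\<forall>B\<in>F. coset N (f B) = N)) \<and>
     (\<forall>B\<in>cls. \<exists>m\<in>Wd G B. \<forall>X\<in>rblock G N B. \<forall>g\<in>m. ract N X g = N)"

definition strong_HC_block :: "('k::field \<Rightarrow> 'a::ring_1 \<Rightarrow> 'a) \<Rightarrow> 'a set \<Rightarrow> 'a set rel \<Rightarrow> bool" where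
  "strong_HC_block scale G R \<longleftrightarrow>
     (\<forall>B\<in>cfs scale G // R. \<forall>m\<in>Wd G B.
        strong_block_left G (cfs scale G // R) (sprod UNIV m) \<and>
        strong_block_right G (cfs scale G // R) (sprod m UNIV))"

definition bimod_iso :: "'a::ring_1 set \<Rightarrow> 'a set \<Rightarrow> 'a set \<Rightarrow> 'a set set \<Rightarrow> ('a set \<Rightarrow> 'a set) \<Rightarrow> bool" where
  "bimod_iso G N1 N2 T \<phi> \<longleftrightarrow> bij_betw \<phi> (quot N1) T \<and>
     (\<forall>X\<in>quot N1. \<forall>Y\<in>quot N1. \<phi> (cadd X Y) = cadd (\<phi> X) (\<phi> Y)) \<and>
     (\<forall>X\<in>quot N1. \<forall>g\<in>G. \<phi> (lact N1 g X) = lact N2 g (\<phi> X) \<and>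
                          \<phi> (ract N1 X g) = ract N2 (\<phi> X) g)"

end

theory Submission
  imports Defs
begin


lemma neg_in_G:
  assumes "k_algebra scale" "subalgebra scale G" "x \<in> G"
  shows "- x \<in> G"
proof -
  have vs: "vector_space scale" using assms(1) unfolding k_algebra_def by blast
  then have "module scale" unfolding vector_space_def module_def .
  then have "scale (-1) x = - x" by (simp add: module.scale_minus_left module.scale_one)
  moreover have "scale (-1) x \<in> G" using assms(2,3) unfolding subalgebra_def by blast
  ultimately show ?thesis by simp
qed

lemma sprod_0: "0 \<in> sprod I J"
  unfolding sprod_def by (rule CollectI, rule exI[of _ 0], auto)

lemma sprod_step:
  assumes "s \<in> sprod I J" "x \<in> I" "y \<in> J"
  shows "s + x * y \<in> sprod I J"
proof -
  obtain n :: nat and xs ys where s: "s = (\<Sum>i<n. xs i * ys i)" "\<forall>i<n. xs i \<in> I \<and> ys i \<in> J"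
    using assms(1) unfolding sprod_def mem_Collect_eq by (elim exE conjE) (rule that, assumption+)
  let ?xs = "xs(n := x)" and ?ys = "ys(n := y)"
  have "(\<Sum>i<Suc n. ?xs i * ?ys i) = (\<Sum>i<n. ?xs i * ?ys i) + x * y" by simp
  also have "(\<Sum>i<n. ?xs i * ?ys i) = s" unfolding s by (rule sum.cong) auto
  finally have "s + x * y = (\<Sum>i<Suc n. ?xs i * ?ys i)" by simp
  moreover have "\<forall>i<Suc n. ?xs i \<in> I \<and> ?ys i \<in> J" using s assms by (auto simp: less_Suc_eq)
  ultimately show ?thesis unfolding sprod_def by blast
qed

lemma sprod_induct[consumes 1, case_names zero step]:
  assumes "s \<in> sprod I J" "P 0"
    "\<And>s x y. s \<in> sprod I J \<Longrightarrow> P s \<Longrightarrow> x \<in> I \<Longrightarrow> y \<in> J \<Longrightarrow> P (s + x * y)"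
  shows "P s"
proof -
  obtain n :: nat and xs ys where s: "s = (\<Sum>i<n. xs i * ys i)" "\<forall>i<n. xs i \<in> I \<and> ys i \<in> J"
    using assms(1) unfolding sprod_def mem_Collect_eq by (elim exE conjE) (rule that, assumption+)
  have "k \<le> n \<longrightarrow> (\<Sum>i<k. xs i * ys i) \<in> sprod I J \<and> P (\<Sum>i<k. xs i * ys i)" for k
  proof (induction k)
    case 0 then show ?case using sprod_0 assms(2) by simp
  next
    case (Suc k)
    show ?case
    proof
      assume "Suc k \<le> n"
      then have h: "(\<Sum>i<k. xs i * ys i) \<in> sprod I J \<and> P (\<Sum>i<k. xs i * ys i)" "xs k \<in> I" "ys k \<in> J"
        using Suc s(2) by auto
      show "(\<Sum>i<Suc k. xs i * ys i) \<in> sprod I J \<and> P (\<Sum>i<Suc k. xs i * ys i)"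
        using sprod_step[OF h(1)[THEN conjunct1] h(2,3)] assms(3)[OF h(1)[THEN conjunct1] h(1)[THEN conjunct2] h(2,3)]
        by simp
    qed
  qed
  then show ?thesis using s by blast
qed

lemma sprod_prod: "x \<in> I \<Longrightarrow> y \<in> J \<Longrightarrow> x * y \<in> sprod I J"
  using sprod_step[OF sprod_0] by fastforce

lemma sprod_add: assumes "s \<in> sprod I J" "t \<in> sprod I J" shows "s + t \<in> sprod I J"
  using assms(2)
proof (induction t rule: sprod_induct)
  case zero then show ?case using assms by simp
next
  case (step t x y)
  then have "(s + t) + x * y \<in> sprod I J" by (intro sprod_step) auto
  then show ?case by (simp add: add.assoc)
qed

lemma sprod_neg:
  assumes "s \<in> sprod I J" "\<forall>y\<in>J. - y \<in> J"
  shows "- s \<in> sprod I J"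
  using assms(1)
proof (induction s rule: sprod_induct)
  case zero then show ?case by (simp add: sprod_0)
next
  case (step s x y)
  have "- s + x * (- y) \<in> sprod I J" using step assms(2) by (intro sprod_step) auto
  then show ?case by (simp add: add.commute)
qed

lemma sprod_lmult:
  assumes "s \<in> sprod I J" "\<forall>x\<in>I. a * x \<in> I"
  shows "a * s \<in> sprod I J"
  using assms(1)
proof (induction s rule: sprod_induct)
  case zero then show ?case by (simp add: sprod_0)
next
  case (step s x y)
  have "a * s + (a * x) * y \<in> sprod I J" using step assms(2) by (intro sprod_step) auto
  then show ?case by (simp add: distrib_left mult.assoc)
qed

lemma sprod_rmult:
  assumes "s \<in> sprod I J" "\<forall>y\<in>J. y * a \<in> J"
  shows "s * a \<in> sprod I J"
  using assms(1)
proof (induction s rule: sprod_induct)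
  case zero then show ?case by (simp add: sprod_0)
next
  case (step s x y)
  have "s * a + x * (y * a) \<in> sprod I J" using step assms(2) by (intro sprod_step) auto
  then show ?case by (simp add: distrib_right mult.assoc)
qed

lemma sprod_subset:
  assumes "s \<in> sprod I J" "0 \<in> S" "\<forall>u\<in>S. \<forall>x\<in>I. \<forall>y\<in>J. u + x * y \<in> S"
  shows "s \<in> S"
  using assms(1) by (induction s rule: sprod_induct) (use assms in auto)

lemma sprod_mono: "I \<subseteq> I' \<Longrightarrow> J \<subseteq> J' \<Longrightarrow> sprod I J \<subseteq> sprod I' J'"
  unfolding sprod_def by blast



definition subr :: "'a::ring_1 set \<Rightarrow> bool" where
  "subr G \<longleftrightarrow> 0 \<in> G \<and> 1 \<in> G \<and> (\<forall>x\<in>G. \<forall>y\<in>G. x + y \<in> G \<and> x * y \<in> G) \<and> (\<forall>x\<in>G. - x \<in> G)"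

lemma subr_from:
  assumes "k_algebra scale" "subalgebra scale G" shows "subr G"
  using assms neg_in_G[OF assms] unfolding subr_def subalgebra_def by blast

lemma ideal_G: "subr G \<Longrightarrow> two_sided_ideal G G"
  unfolding subr_def two_sided_ideal_def by blast

lemma ideal_sprod:
  assumes G: "subr G" and I: "two_sided_ideal G I" and J: "two_sided_ideal G J"
  shows "two_sided_ideal G (sprod I J)"
proof -
  have sub: "sprod I J \<subseteq> G"
  proof
    fix s assume "s \<in> sprod I J"
    then show "s \<in> G"
      by (rule sprod_subset) (use G I J in \<open>auto simp: subr_def two_sided_ideal_def subset_iff\<close>)
  qed
  show ?thesis unfolding two_sided_ideal_def
  proof (intro conjI ballI)
    show "sprod I J \<subseteq> G" by fact
    show "0 \<in> sprod I J" by (rule sprod_0)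
  next
    fix x y assume "x \<in> sprod I J" "y \<in> sprod I J" then show "x + y \<in> sprod I J" by (rule sprod_add)
  next
    fix x assume "x \<in> sprod I J" then show "- x \<in> sprod I J"
      by (rule sprod_neg) (use J in \<open>auto simp: two_sided_ideal_def\<close>)
  next
    fix g x assume "g \<in> G" "x \<in> sprod I J"
    show "g * x \<in> sprod I J"
      by (rule sprod_lmult[OF \<open>x \<in> sprod I J\<close>]) (use I \<open>g \<in> G\<close> in \<open>auto simp: two_sided_ideal_def\<close>)
    show "x * g \<in> sprod I J"
      by (rule sprod_rmult[OF \<open>x \<in> sprod I J\<close>]) (use J \<open>g \<in> G\<close> in \<open>auto simp: two_sided_ideal_def\<close>)
  qed
qed

lemma ideal_prod_ideal:
  assumes "subr G" "\<forall>m\<in>set ms. two_sided_ideal G m"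
  shows "two_sided_ideal G (ideal_prod G ms)"
  using assms(2) by (induction ms) (auto intro: ideal_sprod[OF assms(1)] ideal_G[OF assms(1)])

lemma max_ideal: "maximal_ideal G m \<Longrightarrow> two_sided_ideal G m"
  unfolding maximal_ideal_def by blast

lemma Wd_ideal:
  assumes "subr G" "B \<subseteq> cfs scale G" "n \<in> Wd G B"
  shows "two_sided_ideal G n"
proof -
  obtain ms where "n = ideal_prod G ms" "set ms \<subseteq> B" using assms(3) unfolding Wd_def by blast
  moreover have "\<forall>m\<in>set ms. two_sided_ideal G m" using calculation assms(2) unfolding cfs_def
    by (auto dest: max_ideal)
  ultimately show ?thesis using ideal_prod_ideal[OF assms(1)] by simp
qed

lemma ideal_prod_append1:
  assumes "subr G" "\<forall>m\<in>set (ms1 @ ms2). two_sided_ideal G m"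
  shows "ideal_prod G (ms1 @ ms2) \<subseteq> ideal_prod G ms1"
  using assms(2)
proof (induction ms1)
  case Nil then show ?case using ideal_prod_ideal[OF assms(1), of ms2] by (simp add: two_sided_ideal_def)
next
  case (Cons a ms1) then show ?case by (simp add: sprod_mono)
qed

lemma ideal_prod_append2:
  assumes "subr G" "\<forall>m\<in>set (ms1 @ ms2). two_sided_ideal G m"
  shows "ideal_prod G (ms1 @ ms2) \<subseteq> ideal_prod G ms2"
  using assms(2)
proof (induction ms1)
  case Nil then show ?case by simp
next
  case (Cons a ms1)
  have Q: "two_sided_ideal G (ideal_prod G ms2)" using Cons.prems ideal_prod_ideal[OF assms(1), of ms2] by simp
  have a: "two_sided_ideal G a" using Cons.prems by simp
  have "sprod a (ideal_prod G (ms1 @ ms2)) \<subseteq> sprod a (ideal_prod G ms2)"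
    using Cons by (simp add: sprod_mono)
  also have "\<dots> \<subseteq> ideal_prod G ms2"
  proof
    fix s assume "s \<in> sprod a (ideal_prod G ms2)"
    then show "s \<in> ideal_prod G ms2"
      by (rule sprod_subset) (use Q a in \<open>auto simp: two_sided_ideal_def subset_iff\<close>)
  qed
  finally show ?case by simp
qed

definition comax :: "'a::ring_1 set \<Rightarrow> 'a set \<Rightarrow> bool" where
  "comax I J \<longleftrightarrow> (\<exists>i\<in>I. \<exists>j\<in>J. i + j = 1)"

lemma comax_sym: "comax I J \<Longrightarrow> comax J I"
  unfolding comax_def by (metis add.commute)

lemma comax_sprod:
  assumes I: "two_sided_ideal G I" and J: "J \<subseteq> G" and c1: "comax I J" and c2: "comax I K"
  shows "comax I (sprod J K)"
proof -
  obtain i1 j where h1: "i1 \<in> I" "j \<in> J" "i1 + j = 1" using c1 unfolding comax_def by blast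
  obtain i2 k where h2: "i2 \<in> I" "k \<in> K" "i2 + k = 1" using c2 unfolding comax_def by blast
  have "1 = i1 + j * (i2 + k)" using h1 h2 by simp
  also have "\<dots> = (i1 + j * i2) + j * k" by (simp add: distrib_left add.assoc)
  finally have eq: "(i1 + j * i2) + j * k = 1" by simp
  have "j * i2 \<in> I" using I J h1 h2 unfolding two_sided_ideal_def by blast
  then have "i1 + j * i2 \<in> I" using I h1 unfolding two_sided_ideal_def by blast
  moreover have "j * k \<in> sprod J K" using h1(2) h2(2) by (rule sprod_prod)
  ultimately show ?thesis using eq unfolding comax_def by blast
qed

lemma comax_ideal_prod:
  assumes G: "subr G" and I: "two_sided_ideal G I"
    and ms: "\<forall>m\<in>set ms. two_sided_ideal G m" and c: "\<forall>m\<in>set ms. comax I m"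
  shows "comax I (ideal_prod G ms)"
  using ms c
proof (induction ms)
  case Nil
  have "0 \<in> I" "1 \<in> G" using I G unfolding two_sided_ideal_def subr_def by auto
  then show ?case unfolding comax_def by force
next
  case (Cons a ms)
  then show ?case using comax_sprod[OF I, of a "ideal_prod G ms"]
    by (auto simp: two_sided_ideal_def)
qed

lemma ssumI: "a \<in> I \<Longrightarrow> b \<in> J \<Longrightarrow> a + b \<in> ssum I J"
  unfolding ssum_def by blast

lemma ssumE: "x \<in> ssum I J \<Longrightarrow> (\<And>a b. x = a + b \<Longrightarrow> a \<in> I \<Longrightarrow> b \<in> J \<Longrightarrow> P) \<Longrightarrow> P"
  unfolding ssum_def by blast

lemma comax_max:
  assumes G: "subr G" and m1: "maximal_ideal G m1" and m2: "maximal_ideal G m2" and ne: "m1 \<noteq> m2"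
  shows "comax m1 m2"
proof -
  have i1: "two_sided_ideal G m1" and i2: "two_sided_ideal G m2" using m1 m2 by (auto dest: max_ideal)
  note I1 = i1[unfolded two_sided_ideal_def] and I2 = i2[unfolded two_sided_ideal_def]
  note GG = G[unfolded subr_def]
  let ?S = "ssum m1 m2"
  have S: "two_sided_ideal G ?S"
    unfolding two_sided_ideal_def
  proof (intro conjI ballI)
    show "?S \<subseteq> G"
    proof
      fix x assume "x \<in> ?S"
      then obtain a b where "x = a + b" "a \<in> m1" "b \<in> m2" by (rule ssumE)
      then show "x \<in> G" using I1 I2 GG by blast
    qed
    show "0 \<in> ?S" using ssumI[of 0 m1 0 m2] I1 I2 by simp
  next
    fix x y assume "x \<in> ?S" "y \<in> ?S"
    then obtain a b c d where h: "x = a + b" "y = c + d" "a \<in> m1" "b \<in> m2" "c \<in> m1" "d \<in> m2"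
      by (metis ssumE)
    have "x + y = (a + c) + (b + d)" using h by (simp add: algebra_simps)
    moreover have "(a + c) + (b + d) \<in> ?S" using h I1 I2 by (intro ssumI) auto
    ultimately show "x + y \<in> ?S" by simp
  next
    fix x assume "x \<in> ?S"
    then obtain a b where h: "x = a + b" "a \<in> m1" "b \<in> m2" by (rule ssumE)
    have "- (a + b) = (- a) + (- b)" by simp
    moreover have "(- a) + (- b) \<in> ?S" using h I1 I2 by (intro ssumI) auto
    ultimately show "- x \<in> ?S" using h by simp
  next
    fix g x assume g: "g \<in> G" and "x \<in> ?S"
    then obtain a b where h: "x = a + b" "a \<in> m1" "b \<in> m2" by (metis ssumE)
    have "g * (a + b) = g * a + g * b" "(a + b) * g = a * g + b * g"
      by (simp_all add: algebra_simps)
    moreover have "g * a + g * b \<in> ?S" "a * g + b * g \<in> ?S" using h I1 I2 g by (intro ssumI; auto)+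
    ultimately show "g * x \<in> ?S" "x * g \<in> ?S" using h by simp_all
  qed
  have sub1: "m1 \<subseteq> ?S" using ssumI[of _ m1 0 m2] I2 by auto
  have sub2: "m2 \<subseteq> ?S" using ssumI[of 0 m1 _ m2] I1 by auto
  have "?S = G"
  proof (rule ccontr)
    assume "?S \<noteq> G"
    then have "?S = m1" using m1 S sub1 unfolding maximal_ideal_def by blast
    then have "m2 \<subseteq> m1" using sub2 by simp
    then have "m1 = m2 \<or> m1 = G" using m2 i1 unfolding maximal_ideal_def by blast
    then show False using ne m1 unfolding maximal_ideal_def by blast
  qed
  then have "1 \<in> ?S" using GG by blast
  then show ?thesis unfolding comax_def by (metis ssumE)
qed

lemma comax_Wd:
  assumes G: "subr G" and eq: "equiv (cfs scale G) R"
    and C: "C \<in> cfs scale G // R" and C': "C' \<in> cfs scale G // R" and ne: "C \<noteq> C'"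
    and n: "n \<in> Wd G C" and n': "n' \<in> Wd G C'"
  shows "comax n n'"
proof -
  obtain ms where ms: "n = ideal_prod G ms" "set ms \<subseteq> C" using n unfolding Wd_def by blast
  obtain ms' where ms': "n' = ideal_prod G ms'" "set ms' \<subseteq> C'" using n' unfolding Wd_def by blast
  have Cs: "C \<subseteq> cfs scale G" "C' \<subseteq> cfs scale G" using C C' eq by (auto dest: in_quotient_imp_subset)
  have disj: "C \<inter> C' = {}" using quotient_disj[OF eq C C'] ne by blast
  have idl: "\<forall>m\<in>C. two_sided_ideal G m" "\<forall>m\<in>C'. two_sided_ideal G m"
    using Cs by (auto simp: cfs_def dest: max_ideal)
  have n'i: "two_sided_ideal G n'" using ms' idl ideal_prod_ideal[OF G] by blast
  have "\<forall>a\<in>set ms. comax n' a"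
  proof
    fix a assume a: "a \<in> set ms"
    have "comax a n'" unfolding ms'(1)
    proof (rule comax_ideal_prod[OF G])
      show "two_sided_ideal G a" using a ms idl by blast
      show "\<forall>m\<in>set ms'. two_sided_ideal G m" using ms' idl by blast
      show "\<forall>m\<in>set ms'. comax a m"
      proof
        fix b assume b: "b \<in> set ms'"
        have "a \<noteq> b" using a b ms ms' disj by blast
        moreover have "maximal_ideal G a" "maximal_ideal G b" using a b ms ms' Cs by (auto simp: cfs_def)
        ultimately show "comax a b" using comax_max[OF G] by blast
      qed
    qed
    then show "comax n' a" by (rule comax_sym)
  qed
  then have "comax n' n" unfolding ms(1)
    using comax_ideal_prod[OF G n'i, of ms] ms idl by blast
  then show ?thesis by (rule comax_sym)
qed



definition addsub :: "'a::ring_1 set \<Rightarrow> bool" where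
  "addsub N \<longleftrightarrow> 0 \<in> N \<and> (\<forall>x\<in>N. \<forall>y\<in>N. x + y \<in> N) \<and> (\<forall>x\<in>N. - x \<in> N)"

lemma addsub_diff: "addsub N \<Longrightarrow> x \<in> N \<Longrightarrow> y \<in> N \<Longrightarrow> x - y \<in> N"
  unfolding addsub_def by (metis diff_conv_add_uminus)

lemma coset_mem: "addsub N \<Longrightarrow> a \<in> coset N a"
  unfolding coset_def addsub_def by force

lemma coset_memI: "x \<in> N \<Longrightarrow> a + x \<in> coset N a"
  unfolding coset_def by blast

lemma coset_eq_iff:
  assumes N: "addsub N" shows "coset N a = coset N b \<longleftrightarrow> a - b \<in> N"
proof
  assume "coset N a = coset N b"
  then have "b \<in> coset N a" using coset_mem[OF N] by metis
  then obtain x where "b = a + x" "x \<in> N" unfolding coset_def by blast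
  then show "a - b \<in> N" using N unfolding addsub_def by (simp add: diff_add_eq_diff_diff_swap)
next
  assume d: "a - b \<in> N"
  show "coset N a = coset N b"
  proof (intro set_eqI iffI)
    fix z assume "z \<in> coset N a"
    then obtain x where "z = a + x" "x \<in> N" unfolding coset_def by blast
    moreover have "a + x = b + ((a - b) + x)" by simp
    moreover have "(a - b) + x \<in> N" using N d \<open>x \<in> N\<close> unfolding addsub_def by blast
    ultimately show "z \<in> coset N b" using coset_memI by metis
  next
    fix z assume "z \<in> coset N b"
    then obtain x where "z = b + x" "x \<in> N" unfolding coset_def by blast
    moreover have "b + x = a + (x - (a - b))" by simp
    moreover have "x - (a - b) \<in> N" by (rule addsub_diff[OF N \<open>x \<in> N\<close> d])
    ultimately show "z \<in> coset N a" using coset_memI by metis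
  qed
qed

lemma coset_0: "coset N 0 = N"
  unfolding coset_def by simp

lemma coset_eq_N: "addsub N \<Longrightarrow> coset N a = N \<longleftrightarrow> a \<in> N"
  using coset_eq_iff[of N a 0] coset_0[of N] by simp

lemma quotE: "X \<in> quot N \<Longrightarrow> (\<And>a. X = coset N a \<Longrightarrow> P) \<Longrightarrow> P"
  unfolding quot_def by blast

lemma quotI: "coset N a \<in> quot N"
  unfolding quot_def by blast

lemma cadd_coset:
  assumes N: "addsub N" shows "cadd (coset N a) (coset N b) = coset N (a + b)"
proof (intro set_eqI iffI)
  fix z assume "z \<in> cadd (coset N a) (coset N b)"
  then obtain x y where "z = (a + x) + (b + y)" "x \<in> N" "y \<in> N" unfolding cadd_def coset_def by blast
  moreover have "(a + x) + (b + y) = (a + b) + (x + y)" by (simp add: algebra_simps)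
  ultimately show "z \<in> coset N (a + b)" using N unfolding addsub_def by (metis coset_memI)
next
  fix z assume "z \<in> coset N (a + b)"
  then obtain x where "z = (a + b) + x" "x \<in> N" unfolding coset_def by blast
  moreover have "(a + b) + x = (a + x) + (b + 0)" by (simp add: algebra_simps)
  moreover have "a + x \<in> coset N a" "b + 0 \<in> coset N b" using coset_mem[OF N] \<open>x \<in> N\<close>
    by (auto intro: coset_memI)
  ultimately show "z \<in> cadd (coset N a) (coset N b)" unfolding cadd_def by blast
qed

lemma lact_coset:
  assumes N: "addsub N" and g: "\<forall>k\<in>N. g * k \<in> N"
  shows "lact N g (coset N a) = coset N (g * a)"
proof (intro set_eqI iffI)
  fix z assume "z \<in> lact N g (coset N a)"
  then obtain x k where "z = g * (a + x) + k" "x \<in> N" "k \<in> N" unfolding lact_def coset_def by blast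
  moreover have "g * (a + x) + k = g * a + (g * x + k)" by (simp add: algebra_simps)
  ultimately show "z \<in> coset N (g * a)" using N g unfolding addsub_def by (metis coset_memI)
next
  fix z assume "z \<in> coset N (g * a)"
  then obtain x where "z = g * a + x" "x \<in> N" unfolding coset_def by blast
  moreover have "g * a + x = g * (a + 0) + x" by simp
  moreover have "a + 0 \<in> coset N a" using coset_mem[OF N] by simp
  ultimately show "z \<in> lact N g (coset N a)" unfolding lact_def by blast
qed

lemma ract_coset:
  assumes N: "addsub N" and g: "\<forall>k\<in>N. k * g \<in> N"
  shows "ract N (coset N a) g = coset N (a * g)"
proof (intro set_eqI iffI)
  fix z assume "z \<in> ract N (coset N a) g"
  then obtain x k where "z = (a + x) * g + k" "x \<in> N" "k \<in> N" unfolding ract_def coset_def by blast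
  moreover have "(a + x) * g + k = a * g + (x * g + k)" by (simp add: algebra_simps)
  ultimately show "z \<in> coset N (a * g)" using N g unfolding addsub_def by (metis coset_memI)
next
  fix z assume "z \<in> coset N (a * g)"
  then obtain x where "z = a * g + x" "x \<in> N" unfolding coset_def by blast
  moreover have "a * g + x = (a + 0) * g + x" by simp
  moreover have "a + 0 \<in> coset N a" using coset_mem[OF N] by simp
  ultimately show "z \<in> ract N (coset N a) g" unfolding ract_def by blast
qed

lemma cadd_coset_sup:
  assumes N1: "addsub N1" and sub: "N \<subseteq> N1" and N: "addsub N"
  shows "cadd (coset N c) N1 = coset N1 c"
proof (intro set_eqI iffI)
  fix z assume "z \<in> cadd (coset N c) N1"
  then obtain x y where "z = (c + x) + y" "x \<in> N" "y \<in> N1" unfolding cadd_def coset_def by blast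
  moreover have "(c + x) + y = c + (x + y)" by (simp add: algebra_simps)
  ultimately show "z \<in> coset N1 c" using N1 sub unfolding addsub_def by (metis coset_memI subsetD)
next
  fix z assume "z \<in> coset N1 c"
  then obtain x where "z = c + x" "x \<in> N1" unfolding coset_def by blast
  moreover have "c + x = (c + 0) + x" by simp
  moreover have "c + 0 \<in> coset N c" using coset_mem[OF N] by simp
  ultimately show "z \<in> cadd (coset N c) N1" unfolding cadd_def by blast
qed

lemma iso_from_psi:
  assumes bij: "bij_betw \<psi> T (quot N1)"
    and cl1: "\<forall>X\<in>T. \<forall>Y\<in>T. cadd X Y \<in> T"
    and cl2: "\<forall>X\<in>T. \<forall>g\<in>G. lact N g X \<in> T \<and> ract N X g \<in> T"
    and h1: "\<forall>X\<in>T. \<forall>Y\<in>T. \<psi> (cadd X Y) = cadd (\<psi> X) (\<psi> Y)"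
    and h2: "\<forall>X\<in>T. \<forall>g\<in>G. \<psi> (lact N g X) = lact N1 g (\<psi> X) \<and> \<psi> (ract N X g) = ract N1 (\<psi> X) g"
  shows "bimod_iso G N1 N T (inv_into T \<psi>)"
proof -
  let ?phi = "inv_into T \<psi>"
  have inj: "inj_on \<psi> T" and im: "\<psi> ` T = quot N1" using bij by (auto simp: bij_betw_def)
  have inT: "?phi Z \<in> T" if "Z \<in> quot N1" for Z
    using that im by (auto intro: inv_into_into)
  have bk: "\<psi> (?phi Z) = Z" if "Z \<in> quot N1" for Z
    using that im by (metis f_inv_into_f)
  have phipsi: "?phi (\<psi> X) = X" if "X \<in> T" for X using inj that by (rule inv_into_f_f)
  show ?thesis unfolding bimod_iso_def
  proof (intro conjI ballI)
    show "bij_betw ?phi (quot N1) T" using bij by (rule bij_betw_inv_into)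
  next
    fix X' Y' assume X': "X' \<in> quot N1" and Y': "Y' \<in> quot N1"
    have "cadd X' Y' = \<psi> (cadd (?phi X') (?phi Y'))" using h1 inT[OF X'] inT[OF Y'] bk[OF X'] bk[OF Y'] by simp
    then show "?phi (cadd X' Y') = cadd (?phi X') (?phi Y')"
      using phipsi cl1 inT[OF X'] inT[OF Y'] by simp
  next
    fix X' g assume X': "X' \<in> quot N1" and g: "g \<in> G"
    have "lact N1 g X' = \<psi> (lact N g (?phi X'))" using h2 inT[OF X'] bk[OF X'] g by metis
    then show "?phi (lact N1 g X') = lact N g (?phi X')"
      using phipsi cl2 inT[OF X'] g by simp
    have "ract N1 X' g = \<psi> (ract N (?phi X') g)" using h2 inT[OF X'] bk[OF X'] g by metis
    then show "?phi (ract N1 X' g) = ract N (?phi X') g"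
      using phipsi cl2 inT[OF X'] g by simp
  qed
qed



lemma sum_in: assumes "addsub S" "finite F" "\<forall>B\<in>F. f B \<in> S" shows "sum f F \<in> S"
  using assms(2,3) by (induction F rule: finite_induct) (use assms(1) in \<open>auto simp: addsub_def\<close>)

lemma addsub_sprod: "\<forall>y\<in>J. - y \<in> J \<Longrightarrow> addsub (sprod I J)"
  unfolding addsub_def using sprod_0 sprod_add sprod_neg by blast

lemma addsub_ssum:
  assumes "addsub P" "addsub Q" shows "addsub (ssum P Q)"
  unfolding addsub_def
proof (intro conjI ballI)
  show "0 \<in> ssum P Q" using ssumI[of 0 P 0 Q] assms unfolding addsub_def by simp
next
  fix x y assume "x \<in> ssum P Q" "y \<in> ssum P Q"
  then obtain a b c d where h: "x = a + b" "y = c + d" "a \<in> P" "b \<in> Q" "c \<in> P" "d \<in> Q"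
    by (metis ssumE)
  have "x + y = (a + c) + (b + d)" using h by (simp add: algebra_simps)
  moreover have "(a + c) + (b + d) \<in> ssum P Q" using h assms unfolding addsub_def by (intro ssumI) auto
  ultimately show "x + y \<in> ssum P Q" by simp
next
  fix x assume "x \<in> ssum P Q"
  then obtain a b where h: "x = a + b" "a \<in> P" "b \<in> Q" by (rule ssumE)
  have "- x = (- a) + (- b)" using h by simp
  moreover have "(- a) + (- b) \<in> ssum P Q" using h assms unfolding addsub_def by (intro ssumI) auto
  ultimately show "- x \<in> ssum P Q" by simp
qed

lemma ssum_lmult:
  assumes "x \<in> ssum P Q" "\<forall>k\<in>P. g * k \<in> P" "\<forall>k\<in>Q. g * k \<in> Q"
  shows "g * x \<in> ssum P Q"
proof -
  obtain a b where h: "x = a + b" "a \<in> P" "b \<in> Q" using assms(1) by (rule ssumE)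
  have "g * x = g * a + g * b" using h by (simp add: algebra_simps)
  then show ?thesis using h assms by (auto intro: ssumI)
qed

lemma ssum_rmult:
  assumes "x \<in> ssum P Q" "\<forall>k\<in>P. k * g \<in> P" "\<forall>k\<in>Q. k * g \<in> Q"
  shows "x * g \<in> ssum P Q"
proof -
  obtain a b where h: "x = a + b" "a \<in> P" "b \<in> Q" using assms(1) by (rule ssumE)
  have "x * g = a * g + b * g" using h by (simp add: algebra_simps)
  then show ?thesis using h assms by (auto intro: ssumI)
qed

lemma ssum_sub1: "0 \<in> Q \<Longrightarrow> P \<subseteq> ssum P Q"
  using ssumI[of _ P 0 Q] by auto

lemma ssum_sub2: "0 \<in> P \<Longrightarrow> Q \<subseteq> ssum P Q"
  using ssumI[of 0 P _ Q] by auto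



lemma right_case:
  fixes scale :: "'k::field \<Rightarrow> 'a::ring_1 \<Rightarrow> 'a"
  assumes G: "subr G" and eq: "equiv (cfs scale G) R" and C: "C \<in> cfs scale G // R"
    and l: "two_sided_ideal G l"
    and SB: "strong_block_right G (cfs scale G // R) (sprod l UNIV)"
    and n: "n \<in> Wd G C"
    and nkill: "\<forall>c. coset (sprod l UNIV) c \<in> rblock G (sprod l UNIV) C \<longrightarrow> (\<forall>g\<in>n. c * g \<in> sprod l UNIV)"
  shows "\<exists>\<phi>. bimod_iso G (ssum (sprod l UNIV) (sprod UNIV n)) (sprod l UNIV) (rblock G (sprod l UNIV) C) \<phi>"
proof -
  define cls where "cls = cfs scale G // R"
  define N where "N = sprod l (UNIV :: 'a set)"
  define M where "M = sprod (UNIV :: 'a set) n"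
  define N1 where "N1 = ssum N M"
  define T where "T = rblock G N C"
  have nk: "\<forall>c. coset N c \<in> rblock G N C \<longrightarrow> (\<forall>g\<in>n. c * g \<in> N)" using nkill unfolding N_def .
  have C': "C \<in> cls" using C cls_def by simp
  have clsub: "B \<subseteq> cfs scale G" if "B \<in> cls" for B using that eq cls_def by (auto dest: in_quotient_imp_subset)
  have SBu: "(\<forall>a. \<exists>F f. finite F \<and> F \<subseteq> cls \<and> (\<forall>B\<in>F. coset N (f B) \<in> rblock G N B) \<and>
              coset N a = coset N (\<Sum>B\<in>F. f B)) \<and>
     (\<forall>F f. finite F \<and> F \<subseteq> cls \<and> (\<forall>B\<in>F. coset N (f B) \<in> rblock G N B) \<and>
              coset N (\<Sum>B\<in>F. f B) = N \<longrightarrow> (\<forall>B\<in>F. coset N (f B) = N)) \<and>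
     (\<forall>B\<in>cls. \<exists>m\<in>Wd G B. \<forall>X\<in>rblock G N B. \<forall>g\<in>m. ract N X g = N)"
    using SB unfolding strong_block_right_def N_def cls_def .
  note SB1 = SBu[THEN conjunct1] and SB2 = SBu[THEN conjunct2, THEN conjunct1]
    and SB3 = SBu[THEN conjunct2, THEN conjunct2]
  have NA: "addsub N" unfolding N_def by (rule addsub_sprod) simp
  have Nr: "\<forall>k\<in>N. k * a \<in> N" for a unfolding N_def by (auto intro: sprod_rmult)
  have Nl: "\<forall>k\<in>N. g * k \<in> N" if "g \<in> G" for g
    unfolding N_def using l that by (auto intro!: sprod_lmult simp: two_sided_ideal_def)
  have ni: "two_sided_ideal G n" using Wd_ideal[OF G clsub[OF C'] n] .
  have MA: "addsub M" unfolding M_def by (rule addsub_sprod) (use ni in \<open>auto simp: two_sided_ideal_def\<close>)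
  have Ml: "\<forall>k\<in>M. a * k \<in> M" for a unfolding M_def by (auto intro: sprod_lmult)
  have Mr: "\<forall>k\<in>M. k * g \<in> M" if "g \<in> G" for g
    unfolding M_def using ni that by (auto intro!: sprod_rmult simp: two_sided_ideal_def)
  have N1A: "addsub N1" unfolding N1_def using NA MA by (rule addsub_ssum)
  have NN1: "N \<subseteq> N1" unfolding N1_def using MA ssum_sub1[of M N] by (simp add: addsub_def)
  have MN1: "M \<subseteq> N1" unfolding N1_def using NA ssum_sub2[of N M] by (simp add: addsub_def)
  have N1l: "\<forall>k\<in>N1. g * k \<in> N1" if "g \<in> G" for g
    unfolding N1_def using Nl[OF that] Ml by (auto intro: ssum_lmult)
  have N1r: "\<forall>k\<in>N1. k * g \<in> N1" if "g \<in> G" for g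
    unfolding N1_def using Nr Mr[OF that] by (auto intro: ssum_rmult)
  have rc: "ract N (coset N c) g = coset N (c * g)" for c g using ract_coset[OF NA Nr] .
  obtain ann where annA: "\<forall>B\<in>cls. ann B \<in> Wd G B \<and> (\<forall>X\<in>rblock G N B. \<forall>g\<in>ann B. ract N X g = N)"
    using bchoice[OF SB3[unfolded Bex_def]] by blast
  have ann: "ann B \<in> Wd G B \<and> (\<forall>X\<in>rblock G N B. \<forall>g\<in>ann B. ract N X g = N)" if "B \<in> cls" for B
    using annA that by blast
  have rb_def': "coset N c \<in> rblock G N B \<longleftrightarrow> (\<exists>m\<in>Wd G B. \<forall>g\<in>m. c * g \<in> N)" for B c
    by (simp add: rblock_def rc coset_eq_N[OF NA] quotI)
  have rb_iff: "coset N c \<in> rblock G N B \<longleftrightarrow> (\<forall>g\<in>ann B. c * g \<in> N)" if B: "B \<in> cls" for B c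
  proof
    assume "coset N c \<in> rblock G N B"
    then have "\<forall>g\<in>ann B. ract N (coset N c) g = N" using ann[OF B] by blast
    then show "\<forall>g\<in>ann B. c * g \<in> N" unfolding rc coset_eq_N[OF NA] .
  next
    assume "\<forall>g\<in>ann B. c * g \<in> N"
    then show "coset N c \<in> rblock G N B" unfolding rb_def' using ann[OF B] by blast
  qed
  have killE: "\<exists>m\<in>Wd G B. \<forall>g\<in>m. c * g \<in> N" if "coset N c \<in> rblock G N B" for B c
    using that unfolding rb_def' .
  have annI: "two_sided_ideal G (ann B)" if "B \<in> cls" for B using Wd_ideal[OF G clsub[OF that]] ann[OF that] by blast
  have rb_add: "coset N (c + d) \<in> rblock G N B" if "B \<in> cls" "coset N c \<in> rblock G N B" "coset N d \<in> rblock G N B" for B c d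
    using that rb_iff[OF that(1)] NA by (auto simp: addsub_def distrib_right)
  have rb_neg: "coset N (- c) \<in> rblock G N B" if "B \<in> cls" "coset N c \<in> rblock G N B" for B c
    using that rb_iff[OF that(1)] NA by (auto simp: addsub_def)
  have rb_0: "coset N 0 \<in> rblock G N B" if "B \<in> cls" for B
    using rb_iff[OF that] NA by (auto simp: addsub_def)
  have rb_rm: "coset N (c * h) \<in> rblock G N B" if "B \<in> cls" "coset N c \<in> rblock G N B" "h \<in> G" for B c h
  proof -
    have "\<forall>g\<in>ann B. h * g \<in> ann B" using annI[OF that(1)] that(3) unfolding two_sided_ideal_def by blast
    then show ?thesis using that rb_iff[OF that(1)] by (auto simp: mult.assoc)
  qed
  have rb_lm: "coset N (h * c) \<in> rblock G N B" if "B \<in> cls" "coset N c \<in> rblock G N B" "h \<in> G" for B c h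
    using that rb_iff[OF that(1)] Nl[OF that(3)] by (auto simp: mult.assoc)
  have rbE: "\<exists>c. X = coset N c" if "X \<in> rblock G N B" for X B
    using that unfolding rblock_def by (auto elim: quotE)
  have R1: "\<exists>c. coset N c \<in> T \<and> a - c \<in> N1" for a
  proof -
    obtain F f where F: "finite F" "F \<subseteq> cls" "\<forall>B\<in>F. coset N (f B) \<in> rblock G N B"
      "coset N a = coset N (\<Sum>B\<in>F. f B)" using spec[OF SB1, of a] by blast
    have aN: "a - (\<Sum>B\<in>F. f B) \<in> N" using coset_eq_iff[OF NA, THEN iffD1, OF F(4)] .
    have other: "f B \<in> N1" if B: "B \<in> F - {C}" for B
    proof -
      obtain m where m: "m \<in> Wd G B" "\<forall>g\<in>m. f B * g \<in> N" using killE F(3) B by blast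
      have Bq: "B \<in> cfs scale G // R" "C \<noteq> B" using B F(2) cls_def by auto
      have "comax n m" by (rule comax_Wd[OF G eq C Bq n m(1)])
      then obtain x y where xy: "x \<in> n" "y \<in> m" "x + y = 1" unfolding comax_def by blast
      have "f B * (x + y) = f B * x + f B * y" by (rule distrib_left)
      then have e: "f B = f B * y + f B * x" using xy(3) by (simp add: add.commute)
      have "f B * x \<in> M" unfolding M_def using xy(1) by (intro sprod_prod) auto
      moreover have "f B * y \<in> N" using m(2) xy(2) by blast
      ultimately have "f B * y + f B * x \<in> N1" unfolding N1_def by (intro ssumI)
      then show ?thesis using e by simp
    qed
    have oth: "(\<Sum>B\<in>F - {C}. f B) \<in> N1" using sum_in[OF N1A] F(1) other by blast
    define c where "c = (if C \<in> F then f C else 0)"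
    have split: "(\<Sum>B\<in>F. f B) = c + (\<Sum>B\<in>F - {C}. f B)"
      using F(1) by (simp add: c_def sum.remove)
    have "a - c = (a - (\<Sum>B\<in>F. f B)) + (\<Sum>B\<in>F - {C}. f B)" using split by (simp add: algebra_simps)
    moreover have "(a - (\<Sum>B\<in>F. f B)) + (\<Sum>B\<in>F - {C}. f B) \<in> N1"
      using aN NN1 oth N1A unfolding addsub_def by blast
    moreover have "coset N c \<in> T" unfolding T_def c_def using F(3) rb_0[OF C'] by auto
    ultimately show ?thesis by metis
  qed
  have D: "\<exists>F f. finite F \<and> F \<subseteq> cls - {C} \<and> (\<forall>B\<in>F. coset N (f B) \<in> rblock G N B) \<and> s - sum f F \<in> N"
    if "s \<in> M" for s
    using that[unfolded M_def]
  proof (induction s rule: sprod_induct)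
    case zero
    show ?case by (rule exI[of _ "{}"], rule exI[of _ "\<lambda>_. 0"]) (use NA in \<open>simp add: addsub_def\<close>)
  next
    case (step s x y)
    obtain F f where F: "finite F" "F \<subseteq> cls - {C}" "\<forall>B\<in>F. coset N (f B) \<in> rblock G N B" "s - sum f F \<in> N"
      using step.IH by blast
    obtain F' f' where F': "finite F'" "F' \<subseteq> cls" "\<forall>B\<in>F'. coset N (f' B) \<in> rblock G N B"
      "coset N x = coset N (\<Sum>B\<in>F'. f' B)" using spec[OF SB1, of x] by blast
    have yG: "y \<in> G" using ni step.hyps unfolding two_sided_ideal_def by blast
    define E where "E = F' - {C}"
    define F2 where "F2 = F \<union> E"
    define f2 where "f2 = (\<lambda>B. (if B \<in> F then f B else 0) + (if B \<in> E then f' B * y else 0))"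
    have fin2: "finite F2" using F(1) F'(1) unfolding F2_def E_def by simp
    have sub2: "F2 \<subseteq> cls - {C}" using F(2) F'(2) unfolding F2_def E_def by auto
    have mem2: "\<forall>B\<in>F2. coset N (f2 B) \<in> rblock G N B"
    proof
      fix B assume B: "B \<in> F2"
      then have Bc: "B \<in> cls" using sub2 by blast
      have 1: "coset N (if B \<in> F then f B else 0) \<in> rblock G N B" using F(3) rb_0[OF Bc] by auto
      have 2: "coset N (if B \<in> E then f' B * y else 0) \<in> rblock G N B"
        using F'(3) rb_0[OF Bc] rb_rm[OF Bc _ yG] unfolding E_def by auto
      show "coset N (f2 B) \<in> rblock G N B" unfolding f2_def by (rule rb_add[OF Bc 1 2])
    qed
    have sum2: "sum f2 F2 = sum f F + (\<Sum>B\<in>E. f' B * y)"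
    proof -
      have "sum f2 F2 = (\<Sum>B\<in>F2. if B \<in> F then f B else 0) + (\<Sum>B\<in>F2. if B \<in> E then f' B * y else 0)"
        unfolding f2_def by (rule sum.distrib)
      also have "(\<Sum>B\<in>F2. if B \<in> F then f B else 0) = sum f (F2 \<inter> F)"
        using fin2 by (simp add: sum.inter_restrict)
      also have "F2 \<inter> F = F" unfolding F2_def by blast
      also have "(\<Sum>B\<in>F2. if B \<in> E then f' B * y else 0) = (\<Sum>B\<in>F2 \<inter> E. f' B * y)"
        using fin2 by (simp add: sum.inter_restrict)
      also have "F2 \<inter> E = E" unfolding F2_def by blast
      finally show ?thesis .
    qed
    define c0 where "c0 = (if C \<in> F' then f' C * y else 0)"
    have sF': "(\<Sum>B\<in>F'. f' B) * y = c0 + (\<Sum>B\<in>E. f' B * y)"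
      using F'(1) unfolding c0_def E_def by (simp add: sum_distrib_right sum.remove)
    have c0N: "c0 \<in> N" unfolding c0_def using nk F'(3) step.hyps NA by (auto simp: addsub_def)
    have xN: "(x - (\<Sum>B\<in>F'. f' B)) * y \<in> N" using F'(4) coset_eq_iff[OF NA] Nr by blast
    have e2: "(s + x * y) - sum f2 F2 = (s - sum f F) + ((x - (\<Sum>B\<in>F'. f' B)) * y + c0)"
      using sum2 sF' by (simp add: algebra_simps)
    have "(s - sum f F) + ((x - (\<Sum>B\<in>F'. f' B)) * y + c0) \<in> N"
      using F(4) xN c0N NA unfolding addsub_def by blast
    then have "(s + x * y) - sum f2 F2 \<in> N" unfolding e2 .
    then show ?case using fin2 sub2 mem2 by blast
  qed
  have R2: "c \<in> N" if cT: "coset N c \<in> T" and cN1: "c \<in> N1" for c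
  proof -
    obtain k s where ks: "c = k + s" "k \<in> N" "s \<in> M" using cN1 unfolding N1_def by (rule ssumE)
    obtain F f where F: "finite F" "F \<subseteq> cls - {C}" "\<forall>B\<in>F. coset N (f B) \<in> rblock G N B" "s - sum f F \<in> N"
      using D[OF ks(3)] by blast
    have CF: "C \<notin> F" using F(2) by blast
    define f0 where "f0 = f(C := - c)"
    have sf: "sum f0 F = sum f F" using CF unfolding f0_def by (intro sum.cong) auto
    have fC: "f0 C = - c" unfolding f0_def by simp
    have s0: "sum f0 (insert C F) = - c + sum f F"
      unfolding sum.insert[OF F(1) CF] sf fC ..
    have e3: "- c + sum f F = - (k + (s - sum f F))" unfolding ks(1) by (simp add: algebra_simps)
    have "- (k + (s - sum f F)) \<in> N" using ks F(4) NA unfolding addsub_def by blast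
    then have "coset N (sum f0 (insert C F)) = N" unfolding s0 e3 coset_eq_N[OF NA] .
    moreover have "\<forall>B\<in>insert C F. coset N (f0 B) \<in> rblock G N B"
    proof
      fix B assume B: "B \<in> insert C F"
      show "coset N (f0 B) \<in> rblock G N B"
      proof (cases "B = C")
        case True
        then show ?thesis using rb_neg[OF C' cT[unfolded T_def]] unfolding f0_def by simp
      next
        case False
        then show ?thesis using B F(3) unfolding f0_def by simp
      qed
    qed
    moreover have "insert C F \<subseteq> cls" using F(2) C' by blast
    moreover have "finite (insert C F)" using F(1) by simp
    ultimately have "\<forall>B\<in>insert C F. coset N (f0 B) = N"
      using spec[OF spec[OF SB2, of "insert C F"], of f0] by blast
    then have "coset N (f0 C) = N" by blast
    then have "- c \<in> N" unfolding f0_def using coset_eq_N[OF NA] by simp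
    then show ?thesis using NA unfolding addsub_def by force
  qed
  define \<psi> where "\<psi> = (\<lambda>X. cadd X N1)"
  have psic: "\<psi> (coset N c) = coset N1 c" for c unfolding \<psi>_def using cadd_coset_sup[OF N1A NN1 NA] .
  have Tc: "\<exists>c. X = coset N c" if "X \<in> T" for X using rbE that unfolding T_def by blast
  have bij: "bij_betw \<psi> T (quot N1)"
    unfolding bij_betw_def
  proof
    show "inj_on \<psi> T"
    proof
      fix X Y assume X: "X \<in> T" and Y: "Y \<in> T" and e: "\<psi> X = \<psi> Y"
      obtain c d where cd: "X = coset N c" "Y = coset N d" using Tc X Y by metis
      have "c - d \<in> N1" using e psic cd coset_eq_iff[OF N1A] by metis
      moreover have "coset N (c - d) \<in> T" using rb_add[OF C' _ rb_neg[OF C']] X Y cd unfolding T_def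
        by (metis diff_conv_add_uminus)
      ultimately have "c - d \<in> N" using R2 by blast
      then show "X = Y" using cd coset_eq_iff[OF NA] by blast
    qed
    show "\<psi> ` T = quot N1"
    proof
      show "\<psi> ` T \<subseteq> quot N1" using Tc psic quotI by fastforce
      show "quot N1 \<subseteq> \<psi> ` T"
      proof
        fix Z assume "Z \<in> quot N1"
        then obtain a where a: "Z = coset N1 a" by (rule quotE)
        obtain c where c: "coset N c \<in> T" "a - c \<in> N1" using R1 by blast
        have "Z = \<psi> (coset N c)" using a c psic coset_eq_iff[OF N1A] by metis
        then show "Z \<in> \<psi> ` T" using c by blast
      qed
    qed
  qed
  have cl1: "\<forall>X\<in>T. \<forall>Y\<in>T. cadd X Y \<in> T"
  proof (intro ballI)
    fix X Y assume X: "X \<in> T" and Y: "Y \<in> T"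
    obtain c d where cd: "X = coset N c" "Y = coset N d" using Tc X Y by metis
    show "cadd X Y \<in> T" using cd X Y rb_add[OF C'] cadd_coset[OF NA] unfolding T_def by metis
  qed
  have cl2: "\<forall>X\<in>T. \<forall>g\<in>G. lact N g X \<in> T \<and> ract N X g \<in> T"
  proof (intro ballI)
    fix X g assume X: "X \<in> T" and g: "g \<in> G"
    obtain c where c: "X = coset N c" using Tc X by metis
    show "lact N g X \<in> T \<and> ract N X g \<in> T"
      using c X rb_lm[OF C' _ g] rb_rm[OF C' _ g] lact_coset[OF NA Nl[OF g]] rc unfolding T_def by metis
  qed
  have h1: "\<forall>X\<in>T. \<forall>Y\<in>T. \<psi> (cadd X Y) = cadd (\<psi> X) (\<psi> Y)"
  proof (intro ballI)
    fix X Y assume X: "X \<in> T" and Y: "Y \<in> T"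
    obtain c d where cd: "X = coset N c" "Y = coset N d" using Tc X Y by metis
    show "\<psi> (cadd X Y) = cadd (\<psi> X) (\<psi> Y)" using cd psic cadd_coset[OF NA] cadd_coset[OF N1A] by metis
  qed
  have h2: "\<forall>X\<in>T. \<forall>g\<in>G. \<psi> (lact N g X) = lact N1 g (\<psi> X) \<and> \<psi> (ract N X g) = ract N1 (\<psi> X) g"
  proof (intro ballI)
    fix X g assume X: "X \<in> T" and g: "g \<in> G"
    obtain c where c: "X = coset N c" using Tc X by metis
    show "\<psi> (lact N g X) = lact N1 g (\<psi> X) \<and> \<psi> (ract N X g) = ract N1 (\<psi> X) g"
      using c psic lact_coset[OF NA Nl[OF g]] lact_coset[OF N1A N1l[OF g]] rc ract_coset[OF N1A N1r[OF g]]
      by metis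
  qed
  have "bimod_iso G N1 N T (inv_into T \<psi>)" by (rule iso_from_psi[OF bij cl1 cl2 h1 h2])
  then show ?thesis unfolding N1_def N_def M_def T_def by blast
qed



lemma left_case:
  fixes scale :: "'k::field \<Rightarrow> 'a::ring_1 \<Rightarrow> 'a"
  assumes G: "subr G" and eq: "equiv (cfs scale G) R" and C: "C \<in> cfs scale G // R"
    and mi: "two_sided_ideal G m"
    and SB: "strong_block_left G (cfs scale G // R) (sprod UNIV m)"
    and n: "n \<in> Wd G C"
    and nkill: "\<forall>c. coset (sprod UNIV m) c \<in> lblock G (sprod UNIV m) C \<longrightarrow> (\<forall>g\<in>n. g * c \<in> sprod UNIV m)"
  shows "\<exists>\<psi>. bimod_iso G (ssum (sprod n UNIV) (sprod UNIV m)) (sprod UNIV m) (lblock G (sprod UNIV m) C) \<psi>"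
proof -
  define cls where "cls = cfs scale G // R"
  define N where "N = sprod (UNIV :: 'a set) m"
  define M where "M = sprod n (UNIV :: 'a set)"
  define N1 where "N1 = ssum M N"
  define T where "T = lblock G N C"
  have nk: "\<forall>c. coset N c \<in> lblock G N C \<longrightarrow> (\<forall>g\<in>n. g * c \<in> N)" using nkill unfolding N_def .
  have C': "C \<in> cls" using C cls_def by simp
  have clsub: "B \<subseteq> cfs scale G" if "B \<in> cls" for B using that eq cls_def by (auto dest: in_quotient_imp_subset)
  have SBu: "(\<forall>a. \<exists>F f. finite F \<and> F \<subseteq> cls \<and> (\<forall>B\<in>F. coset N (f B) \<in> lblock G N B) \<and>
              coset N a = coset N (\<Sum>B\<in>F. f B)) \<and>
     (\<forall>F f. finite F \<and> F \<subseteq> cls \<and> (\<forall>B\<in>F. coset N (f B) \<in> lblock G N B) \<and>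
              coset N (\<Sum>B\<in>F. f B) = N \<longrightarrow> (\<forall>B\<in>F. coset N (f B) = N)) \<and>
     (\<forall>B\<in>cls. \<exists>m\<in>Wd G B. \<forall>X\<in>lblock G N B. \<forall>g\<in>m. lact N g X = N)"
    using SB unfolding strong_block_left_def N_def cls_def .
  note SB1 = SBu[THEN conjunct1] and SB2 = SBu[THEN conjunct2, THEN conjunct1]
    and SB3 = SBu[THEN conjunct2, THEN conjunct2]
  have NA: "addsub N" unfolding N_def by (rule addsub_sprod) (use mi in \<open>auto simp: two_sided_ideal_def\<close>)
  have Nl: "\<forall>k\<in>N. a * k \<in> N" for a unfolding N_def by (auto intro: sprod_lmult)
  have Nr: "\<forall>k\<in>N. k * g \<in> N" if "g \<in> G" for g
    unfolding N_def using mi that by (auto intro!: sprod_rmult simp: two_sided_ideal_def)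
  have ni: "two_sided_ideal G n" using Wd_ideal[OF G clsub[OF C'] n] .
  have MA: "addsub M" unfolding M_def by (rule addsub_sprod) simp
  have Mr: "\<forall>k\<in>M. k * a \<in> M" for a unfolding M_def by (auto intro: sprod_rmult)
  have Ml: "\<forall>k\<in>M. g * k \<in> M" if "g \<in> G" for g
    unfolding M_def using ni that by (auto intro!: sprod_lmult simp: two_sided_ideal_def)
  have N1A: "addsub N1" unfolding N1_def using MA NA by (rule addsub_ssum)
  have NN1: "N \<subseteq> N1" unfolding N1_def using MA ssum_sub2[of M N] by (simp add: addsub_def)
  have N1l: "\<forall>k\<in>N1. g * k \<in> N1" if "g \<in> G" for g
    unfolding N1_def using Ml[OF that] Nl by (auto intro: ssum_lmult)
  have N1r: "\<forall>k\<in>N1. k * g \<in> N1" if "g \<in> G" for g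
    unfolding N1_def using Mr Nr[OF that] by (auto intro: ssum_rmult)
  have lc: "lact N g (coset N c) = coset N (g * c)" for c g using lact_coset[OF NA Nl] .
  obtain ann where annA: "\<forall>B\<in>cls. ann B \<in> Wd G B \<and> (\<forall>X\<in>lblock G N B. \<forall>g\<in>ann B. lact N g X = N)"
    using bchoice[OF SB3[unfolded Bex_def]] by blast
  have ann: "ann B \<in> Wd G B \<and> (\<forall>X\<in>lblock G N B. \<forall>g\<in>ann B. lact N g X = N)" if "B \<in> cls" for B
    using annA that by blast
  have rb_def': "coset N c \<in> lblock G N B \<longleftrightarrow> (\<exists>m\<in>Wd G B. \<forall>g\<in>m. g * c \<in> N)" for B c
    by (simp add: lblock_def lc coset_eq_N[OF NA] quotI)
  have rb_iff: "coset N c \<in> lblock G N B \<longleftrightarrow> (\<forall>g\<in>ann B. g * c \<in> N)" if B: "B \<in> cls" for B c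
  proof
    assume "coset N c \<in> lblock G N B"
    then have "\<forall>g\<in>ann B. lact N g (coset N c) = N" using ann[OF B] by blast
    then show "\<forall>g\<in>ann B. g * c \<in> N" unfolding lc coset_eq_N[OF NA] .
  next
    assume "\<forall>g\<in>ann B. g * c \<in> N"
    then show "coset N c \<in> lblock G N B" unfolding rb_def' using ann[OF B] by blast
  qed
  have killE: "\<exists>m\<in>Wd G B. \<forall>g\<in>m. g * c \<in> N" if "coset N c \<in> lblock G N B" for B c
    using that unfolding rb_def' .
  have annI: "two_sided_ideal G (ann B)" if "B \<in> cls" for B using Wd_ideal[OF G clsub[OF that]] ann[OF that] by blast
  have rb_add: "coset N (c + d) \<in> lblock G N B" if "B \<in> cls" "coset N c \<in> lblock G N B" "coset N d \<in> lblock G N B" for B c d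
    using that rb_iff[OF that(1)] NA by (auto simp: addsub_def distrib_left)
  have rb_neg: "coset N (- c) \<in> lblock G N B" if "B \<in> cls" "coset N c \<in> lblock G N B" for B c
    using that rb_iff[OF that(1)] NA by (auto simp: addsub_def)
  have rb_0: "coset N 0 \<in> lblock G N B" if "B \<in> cls" for B
    using rb_iff[OF that] NA by (auto simp: addsub_def)
  have rb_lm: "coset N (h * c) \<in> lblock G N B" if "B \<in> cls" "coset N c \<in> lblock G N B" "h \<in> G" for B c h
  proof -
    have "\<forall>g\<in>ann B. g * h \<in> ann B" using annI[OF that(1)] that(3) unfolding two_sided_ideal_def by blast
    then show ?thesis using that rb_iff[OF that(1)] by (auto simp: mult.assoc[symmetric])
  qed
  have rb_rm: "coset N (c * h) \<in> lblock G N B" if "B \<in> cls" "coset N c \<in> lblock G N B" "h \<in> G" for B c h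
    using that rb_iff[OF that(1)] Nr[OF that(3)] by (auto simp: mult.assoc[symmetric])
  have rbE: "\<exists>c. X = coset N c" if "X \<in> lblock G N B" for X B
    using that unfolding lblock_def by (auto elim: quotE)
  have R1: "\<exists>c. coset N c \<in> T \<and> a - c \<in> N1" for a
  proof -
    obtain F f where F: "finite F" "F \<subseteq> cls" "\<forall>B\<in>F. coset N (f B) \<in> lblock G N B"
      "coset N a = coset N (\<Sum>B\<in>F. f B)" using spec[OF SB1, of a] by blast
    have aN: "a - (\<Sum>B\<in>F. f B) \<in> N" using coset_eq_iff[OF NA, THEN iffD1, OF F(4)] .
    have other: "f B \<in> N1" if B: "B \<in> F - {C}" for B
    proof -
      obtain m where m: "m \<in> Wd G B" "\<forall>g\<in>m. g * f B \<in> N" using killE F(3) B by blast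
      have Bq: "B \<in> cfs scale G // R" "C \<noteq> B" using B F(2) cls_def by auto
      have "comax n m" by (rule comax_Wd[OF G eq C Bq n m(1)])
      then obtain x y where xy: "x \<in> n" "y \<in> m" "x + y = 1" unfolding comax_def by blast
      have "(x + y) * f B = x * f B + y * f B" by (rule distrib_right)
      then have e: "f B = x * f B + y * f B" using xy(3) by simp
      have "x * f B \<in> M" unfolding M_def using xy(1) by (intro sprod_prod) auto
      moreover have "y * f B \<in> N" using m(2) xy(2) by blast
      ultimately have "x * f B + y * f B \<in> N1" unfolding N1_def by (intro ssumI)
      then show ?thesis using e by simp
    qed
    have oth: "(\<Sum>B\<in>F - {C}. f B) \<in> N1" using sum_in[OF N1A] F(1) other by blast
    define c where "c = (if C \<in> F then f C else 0)"
    have split: "(\<Sum>B\<in>F. f B) = c + (\<Sum>B\<in>F - {C}. f B)"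
      using F(1) by (simp add: c_def sum.remove)
    have "a - c = (a - (\<Sum>B\<in>F. f B)) + (\<Sum>B\<in>F - {C}. f B)" using split by (simp add: algebra_simps)
    moreover have "(a - (\<Sum>B\<in>F. f B)) + (\<Sum>B\<in>F - {C}. f B) \<in> N1"
      using aN NN1 oth N1A unfolding addsub_def by blast
    moreover have "coset N c \<in> T" unfolding T_def c_def using F(3) rb_0[OF C'] by auto
    ultimately show ?thesis by metis
  qed
  have D: "\<exists>F f. finite F \<and> F \<subseteq> cls - {C} \<and> (\<forall>B\<in>F. coset N (f B) \<in> lblock G N B) \<and> s - sum f F \<in> N"
    if "s \<in> M" for s
    using that[unfolded M_def]
  proof (induction s rule: sprod_induct)
    case zero
    show ?case by (rule exI[of _ "{}"], rule exI[of _ "\<lambda>_. 0"]) (use NA in \<open>simp add: addsub_def\<close>)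
  next
    case (step s x y)
    obtain F f where F: "finite F" "F \<subseteq> cls - {C}" "\<forall>B\<in>F. coset N (f B) \<in> lblock G N B" "s - sum f F \<in> N"
      using step.IH by blast
    obtain F' f' where F': "finite F'" "F' \<subseteq> cls" "\<forall>B\<in>F'. coset N (f' B) \<in> lblock G N B"
      "coset N y = coset N (\<Sum>B\<in>F'. f' B)" using spec[OF SB1, of y] by blast
    have xG: "x \<in> G" using ni step.hyps unfolding two_sided_ideal_def by blast
    define E where "E = F' - {C}"
    define F2 where "F2 = F \<union> E"
    define f2 where "f2 = (\<lambda>B. (if B \<in> F then f B else 0) + (if B \<in> E then x * f' B else 0))"
    have fin2: "finite F2" using F(1) F'(1) unfolding F2_def E_def by simp
    have sub2: "F2 \<subseteq> cls - {C}" using F(2) F'(2) unfolding F2_def E_def by auto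
    have mem2: "\<forall>B\<in>F2. coset N (f2 B) \<in> lblock G N B"
    proof
      fix B assume B: "B \<in> F2"
      then have Bc: "B \<in> cls" using sub2 by blast
      have 1: "coset N (if B \<in> F then f B else 0) \<in> lblock G N B" using F(3) rb_0[OF Bc] by auto
      have 2: "coset N (if B \<in> E then x * f' B else 0) \<in> lblock G N B"
        using F'(3) rb_0[OF Bc] rb_lm[OF Bc _ xG] unfolding E_def by auto
      show "coset N (f2 B) \<in> lblock G N B" unfolding f2_def by (rule rb_add[OF Bc 1 2])
    qed
    have sum2: "sum f2 F2 = sum f F + (\<Sum>B\<in>E. x * f' B)"
    proof -
      have "sum f2 F2 = (\<Sum>B\<in>F2. if B \<in> F then f B else 0) + (\<Sum>B\<in>F2. if B \<in> E then x * f' B else 0)"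
        unfolding f2_def by (rule sum.distrib)
      also have "(\<Sum>B\<in>F2. if B \<in> F then f B else 0) = sum f (F2 \<inter> F)"
        using fin2 by (simp add: sum.inter_restrict)
      also have "F2 \<inter> F = F" unfolding F2_def by blast
      also have "(\<Sum>B\<in>F2. if B \<in> E then x * f' B else 0) = (\<Sum>B\<in>F2 \<inter> E. x * f' B)"
        using fin2 by (simp add: sum.inter_restrict)
      also have "F2 \<inter> E = E" unfolding F2_def by blast
      finally show ?thesis .
    qed
    define c0 where "c0 = (if C \<in> F' then x * f' C else 0)"
    have sF': "x * (\<Sum>B\<in>F'. f' B) = c0 + (\<Sum>B\<in>E. x * f' B)"
      using F'(1) unfolding c0_def E_def by (simp add: sum_distrib_left sum.remove)
    have c0N: "c0 \<in> N" unfolding c0_def using nk F'(3) step.hyps NA by (auto simp: addsub_def)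
    have xN: "x * (y - (\<Sum>B\<in>F'. f' B)) \<in> N" using F'(4) coset_eq_iff[OF NA] Nl by blast
    have e2: "(s + x * y) - sum f2 F2 = (s - sum f F) + (x * (y - (\<Sum>B\<in>F'. f' B)) + c0)"
      using sum2 sF' by (simp add: algebra_simps)
    have "(s - sum f F) + (x * (y - (\<Sum>B\<in>F'. f' B)) + c0) \<in> N"
      using F(4) xN c0N NA unfolding addsub_def by blast
    then have "(s + x * y) - sum f2 F2 \<in> N" unfolding e2 .
    then show ?case using fin2 sub2 mem2 by blast
  qed
  have R2: "c \<in> N" if cT: "coset N c \<in> T" and cN1: "c \<in> N1" for c
  proof -
    obtain s k where ks: "c = s + k" "s \<in> M" "k \<in> N" using cN1 unfolding N1_def by (rule ssumE)
    obtain F f where F: "finite F" "F \<subseteq> cls - {C}" "\<forall>B\<in>F. coset N (f B) \<in> lblock G N B" "s - sum f F \<in> N"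
      using D[OF ks(2)] by blast
    have CF: "C \<notin> F" using F(2) by blast
    define f0 where "f0 = f(C := - c)"
    have sf: "sum f0 F = sum f F" using CF unfolding f0_def by (intro sum.cong) auto
    have fC: "f0 C = - c" unfolding f0_def by simp
    have s0: "sum f0 (insert C F) = - c + sum f F"
      unfolding sum.insert[OF F(1) CF] sf fC ..
    have e3: "- c + sum f F = - (k + (s - sum f F))" unfolding ks(1) by (simp add: algebra_simps)
    have "- (k + (s - sum f F)) \<in> N" using ks F(4) NA unfolding addsub_def by blast
    then have "coset N (sum f0 (insert C F)) = N" unfolding s0 e3 coset_eq_N[OF NA] .
    moreover have "\<forall>B\<in>insert C F. coset N (f0 B) \<in> lblock G N B"
    proof
      fix B assume B: "B \<in> insert C F"
      show "coset N (f0 B) \<in> lblock G N B"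
      proof (cases "B = C")
        case True
        then show ?thesis using rb_neg[OF C' cT[unfolded T_def]] unfolding f0_def by simp
      next
        case False
        then show ?thesis using B F(3) unfolding f0_def by simp
      qed
    qed
    moreover have "insert C F \<subseteq> cls" using F(2) C' by blast
    moreover have "finite (insert C F)" using F(1) by simp
    ultimately have "\<forall>B\<in>insert C F. coset N (f0 B) = N"
      using spec[OF spec[OF SB2, of "insert C F"], of f0] by blast
    then have "coset N (f0 C) = N" by blast
    then have "- c \<in> N" unfolding f0_def using coset_eq_N[OF NA] by simp
    then show ?thesis using NA unfolding addsub_def by force
  qed
  define \<psi> where "\<psi> = (\<lambda>X. cadd X N1)"
  have psic: "\<psi> (coset N c) = coset N1 c" for c unfolding \<psi>_def using cadd_coset_sup[OF N1A NN1 NA] .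
  have Tc: "\<exists>c. X = coset N c" if "X \<in> T" for X using rbE that unfolding T_def by blast
  have bij: "bij_betw \<psi> T (quot N1)"
    unfolding bij_betw_def
  proof
    show "inj_on \<psi> T"
    proof
      fix X Y assume X: "X \<in> T" and Y: "Y \<in> T" and e: "\<psi> X = \<psi> Y"
      obtain c d where cd: "X = coset N c" "Y = coset N d" using Tc X Y by metis
      have "c - d \<in> N1" using e psic cd coset_eq_iff[OF N1A] by metis
      moreover have "coset N (c - d) \<in> T" using rb_add[OF C' _ rb_neg[OF C']] X Y cd unfolding T_def
        by (metis diff_conv_add_uminus)
      ultimately have "c - d \<in> N" using R2 by blast
      then show "X = Y" using cd coset_eq_iff[OF NA] by blast
    qed
    show "\<psi> ` T = quot N1"
    proof
      show "\<psi> ` T \<subseteq> quot N1" using Tc psic quotI by fastforce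
      show "quot N1 \<subseteq> \<psi> ` T"
      proof
        fix Z assume "Z \<in> quot N1"
        then obtain a where a: "Z = coset N1 a" by (rule quotE)
        obtain c where c: "coset N c \<in> T" "a - c \<in> N1" using R1 by blast
        have "Z = \<psi> (coset N c)" using a c psic coset_eq_iff[OF N1A] by metis
        then show "Z \<in> \<psi> ` T" using c by blast
      qed
    qed
  qed
  have cl1: "\<forall>X\<in>T. \<forall>Y\<in>T. cadd X Y \<in> T"
  proof (intro ballI)
    fix X Y assume X: "X \<in> T" and Y: "Y \<in> T"
    obtain c d where cd: "X = coset N c" "Y = coset N d" using Tc X Y by metis
    show "cadd X Y \<in> T" using cd X Y rb_add[OF C'] cadd_coset[OF NA] unfolding T_def by metis
  qed
  have cl2: "\<forall>X\<in>T. \<forall>g\<in>G. lact N g X \<in> T \<and> ract N X g \<in> T"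
  proof (intro ballI)
    fix X g assume X: "X \<in> T" and g: "g \<in> G"
    obtain c where c: "X = coset N c" using Tc X by metis
    show "lact N g X \<in> T \<and> ract N X g \<in> T"
      using c X rb_lm[OF C' _ g] rb_rm[OF C' _ g] ract_coset[OF NA Nr[OF g]] lc unfolding T_def by metis
  qed
  have h1: "\<forall>X\<in>T. \<forall>Y\<in>T. \<psi> (cadd X Y) = cadd (\<psi> X) (\<psi> Y)"
  proof (intro ballI)
    fix X Y assume X: "X \<in> T" and Y: "Y \<in> T"
    obtain c d where cd: "X = coset N c" "Y = coset N d" using Tc X Y by metis
    show "\<psi> (cadd X Y) = cadd (\<psi> X) (\<psi> Y)" using cd psic cadd_coset[OF NA] cadd_coset[OF N1A] by metis
  qed
  have h2: "\<forall>X\<in>T. \<forall>g\<in>G. \<psi> (lact N g X) = lact N1 g (\<psi> X) \<and> \<psi> (ract N X g) = ract N1 (\<psi> X) g"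
  proof (intro ballI)
    fix X g assume X: "X \<in> T" and g: "g \<in> G"
    obtain c where c: "X = coset N c" using Tc X by metis
    show "\<psi> (lact N g X) = lact N1 g (\<psi> X) \<and> \<psi> (ract N X g) = ract N1 (\<psi> X) g"
      using c psic lc lact_coset[OF N1A N1l[OF g]] ract_coset[OF NA Nr[OF g]] ract_coset[OF N1A N1r[OF g]]
      by metis
  qed
  have "bimod_iso G N1 N T (inv_into T \<psi>)" by (rule iso_from_psi[OF bij cl1 cl2 h1 h2])
  then show ?thesis unfolding N1_def N_def M_def T_def by blast
qed



theorem mainTheorem18:
  fixes scale :: "'k::field \<Rightarrow> 'a::ring_1 \<Rightarrow> 'a"
    and G :: "'a set" and R :: "'a set rel"
    and B C D :: "'a set set" and m l :: "'a set"
  assumes "k_algebra scale"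
    and "subalgebra scale G"
    and "equiv (cfs scale G) R"
    and "strong_HC_block scale G R"
    and "B \<in> cfs scale G // R" and "C \<in> cfs scale G // R" and "D \<in> cfs scale G // R"
    and "m \<in> Wd G B" and "l \<in> Wd G D"
  shows "\<exists>n\<in>Wd G C.
           (\<exists>\<phi>. bimod_iso G (ssum (sprod l UNIV) (sprod UNIV n)) (sprod l UNIV)
                   (rblock G (sprod l UNIV) C) \<phi>) \<and>
           (\<exists>\<psi>. bimod_iso G (ssum (sprod n UNIV) (sprod UNIV m)) (sprod UNIV m)
                   (lblock G (sprod UNIV m) C) \<psi>)"
proof -
  note eq = assms(3)
  have G: "subr G" using assms(1,2) by (rule subr_from)
  have sub: "X \<subseteq> cfs scale G" if "X \<in> cfs scale G // R" for X using eq that by (rule in_quotient_imp_subset)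
  have li: "two_sided_ideal G l" using Wd_ideal[OF G sub[OF assms(7)] assms(9)] .
  have mi: "two_sided_ideal G m" using Wd_ideal[OF G sub[OF assms(5)] assms(8)] .
  have SBR: "strong_block_right G (cfs scale G // R) (sprod l UNIV)"
    using assms(4,7,9) unfolding strong_HC_block_def by blast
  have SBL: "strong_block_left G (cfs scale G // R) (sprod UNIV m)"
    using assms(4,5,8) unfolding strong_HC_block_def by blast
  define NR where "NR = sprod l (UNIV :: 'a set)"
  define NL where "NL = sprod (UNIV :: 'a set) m"
  have NRA: "addsub NR" unfolding NR_def by (rule addsub_sprod) simp
  have NLA: "addsub NL" unfolding NL_def by (rule addsub_sprod) (use mi in \<open>auto simp: two_sided_ideal_def\<close>)
  have NRr: "\<forall>k\<in>NR. k * a \<in> NR" for a unfolding NR_def by (auto intro: sprod_rmult)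
  have NLl: "\<forall>k\<in>NL. a * k \<in> NL" for a unfolding NL_def by (auto intro: sprod_lmult)
  have "\<forall>B\<in>cfs scale G // R. \<exists>m\<in>Wd G B. \<forall>X\<in>rblock G NR B. \<forall>g\<in>m. ract NR X g = NR"
    using SBR unfolding strong_block_right_def NR_def by blast
  then obtain nr where nr: "nr \<in> Wd G C" "\<forall>X\<in>rblock G NR C. \<forall>g\<in>nr. ract NR X g = NR"
    using assms(6) by blast
  have "\<forall>B\<in>cfs scale G // R. \<exists>m\<in>Wd G B. \<forall>X\<in>lblock G NL B. \<forall>g\<in>m. lact NL g X = NL"
    using SBL unfolding strong_block_left_def NL_def by blast
  then obtain nl where nl: "nl \<in> Wd G C" "\<forall>X\<in>lblock G NL C. \<forall>g\<in>nl. lact NL g X = NL"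
    using assms(6) by blast
  obtain msr where msr: "nr = ideal_prod G msr" "set msr \<subseteq> C" using nr(1) unfolding Wd_def by blast
  obtain msl where msl: "nl = ideal_prod G msl" "set msl \<subseteq> C" using nl(1) unfolding Wd_def by blast
  define n where "n = ideal_prod G (msr @ msl)"
  have nW: "n \<in> Wd G C" unfolding n_def Wd_def using msr(2) msl(2) by (intro CollectI exI[of _ "msr @ msl"]) auto
  have idl: "\<forall>x\<in>set (msr @ msl). two_sided_ideal G x"
    using msr(2) msl(2) sub[OF assms(6)] by (auto simp: cfs_def dest: max_ideal)
  have n1: "n \<subseteq> nr" unfolding n_def msr(1) by (rule ideal_prod_append1[OF G idl])
  have n2: "n \<subseteq> nl" unfolding n_def msl(1) by (rule ideal_prod_append2[OF G idl])
  have killR: "\<forall>c. coset (sprod l UNIV) c \<in> rblock G (sprod l UNIV) C \<longrightarrow> (\<forall>g\<in>n. c * g \<in> sprod l UNIV)"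
  proof (intro allI impI ballI)
    fix c g assume c: "coset (sprod l UNIV) c \<in> rblock G (sprod l UNIV) C" and g: "g \<in> n"
    have "ract NR (coset NR c) g = NR" using nr(2) c g n1 unfolding NR_def by blast
    then have "c * g \<in> NR" unfolding ract_coset[OF NRA NRr] coset_eq_N[OF NRA] .
    then show "c * g \<in> sprod l UNIV" unfolding NR_def .
  qed
  have killL: "\<forall>c. coset (sprod UNIV m) c \<in> lblock G (sprod UNIV m) C \<longrightarrow> (\<forall>g\<in>n. g * c \<in> sprod UNIV m)"
  proof (intro allI impI ballI)
    fix c g assume c: "coset (sprod UNIV m) c \<in> lblock G (sprod UNIV m) C" and g: "g \<in> n"
    have "lact NL g (coset NL c) = NL" using nl(2) c g n2 unfolding NL_def by blast
    then have "g * c \<in> NL" unfolding lact_coset[OF NLA NLl] coset_eq_N[OF NLA] .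
    then show "g * c \<in> sprod UNIV m" unfolding NL_def .
  qed
  show ?thesis
    using right_case[OF G eq assms(6) li SBR nW killR] left_case[OF G eq assms(6) mi SBL nW killL] nW
    by blast
qed

end
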